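(* Let $\phi:\mathbb{R}^d\to\mathbb{R}$ be differentiable with constants $0<m\le M$ such that $m\|x-y\|^2\le[\nabla\phi(x)-\nabla\phi(y)]^T(x-y)\le M\|x-y\|^2$ for all $x,y\in\mathbb{R}^d$, and let the observed function $f$ and gradient $g$ satisfy $|\phi(x)-f(x)|\le\epsilon_f$ and $\|\nabla\phi(x)-g(x)\|\le\epsilon_g$ for all $x$, with $\epsilon_f\ge0$, $\epsilon_g>0$. Let $\{x_k\}$, $\{p_k\}$ be generated by the Noise-Tolerant BFGS/L-BFGS method described in the context, using either the full-BFGS or the L-BFGS variant. Then for any $0<q<1$ there exists $\gamma>0$ such that for all $k\in\mathbb{N}$, $$|J(\gamma)\cap[0,k-1]|\ge qk,$$ where $J(\gamma)=\{k\in\mathbb{N}:\cos\theta_k\ge\gamma\}$ and $\theta_k$ is the angle between $p_k$ and $-g(x_k)$.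
   Context: Noise-Tolerant BFGS/L-BFGS method: inputs are the noisy function $f$ and gradient $g$, the gradient noise bound $\epsilon_g$, constants $0<c_1<c_2<1$ and $c_3>0$, an initial point $x_0$ and a symmetric positive definite $H_0$. For $k=0,1,2,\dots$: (1) compute $p_k=-H_kg(x_k)$, where in the full-BFGS variant $H_k$ is the current BFGS matrix and in the L-BFGS variant with memory $t$, $H_k$ is obtained by applying the BFGS update successively with the most recent (up to) $t$ stored pairs $(s_i,y_i)$ to the initial matrix $\gamma_kI$, $\gamma_k=s_{k-1}^Ty_{k-1}/y_{k-1}^Ty_{k-1}$; (2) perform a line search to obtain $\alpha_k>0$ satisfying the Armijo condition $f(x_k+\alpha_kp_k)\le f(x_k)+c_1\alpha_kg(x_k)^Tp_k$ and the Wolfe condition $g(x_k+\alpha_kp_k)^Tp_k\ge c_2g(x_k)^Tp_k$; if the line search fails, compute $\alpha_k$ such that $f(x_k+\alpha_kp_k)\le f(x_k)$; (3) set $x_{k+1}=x_k+\alpha_kp_k$; (4) compute a lengthening parameter $\beta_k>0$ satisfying the noise control condition $(g(x_k+\beta_kp_k)-g(x_k))^Tp_k\ge2(1+c_3)\epsilon_g\|p_k\|$; (5) set $s_k=\beta_kp_k$, $y_k=g(x_k+\beta_kp_k)-g(x_k)$; (6) update $H_{k+1}=(I-\rho_ks_ky_k^T)H_k(I-\rho_ky_ks_k^T)+\rho_ks_ks_k^T$ with $\rho_k=1/y_k^Ts_k$ (full BFGS), or add $(s_k,y_k)$ to the stored set of the last $t$ pairs (L-BFGS). $\|\cdot\|$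 is the Euclidean norm. *)

theory Defs
  imports "HOL-Analysis.Analysis"
begin

definition outer :: "real^'n \<Rightarrow> real^'n \<Rightarrow> real^'n^'n" where
  "outer u v = (\<chi> i j. u $ i * v $ j)"

definition bfgs_update :: "real^'n \<Rightarrow> real^'n \<Rightarrow> real^'n^'n \<Rightarrow> real^'n^'n" where
  "bfgs_update s y H =
     (let \<rho> = 1 / (y \<bullet> s) in
       (mat 1 - \<rho> *\<^sub>R outer s y) ** H ** (mat 1 - \<rho> *\<^sub>R outer y s) + \<rho> *\<^sub>R outer s s)"

text \<open>L-BFGS matrix with memory t at iteration k (k \<ge> 1): successive BFGS updates with
  the pairs i = max(0,k-t), ..., k-1 (oldest first) applied to gamma_k I,
  gamma_k = s_{k-1}^T y_{k-1} / y_{k-1}^T y_{k-1}.\<close>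
definition lbfgs_matrix :: "nat \<Rightarrow> (nat \<Rightarrow> real^'n) \<Rightarrow> (nat \<Rightarrow> real^'n) \<Rightarrow> nat \<Rightarrow> real^'n^'n" where
  "lbfgs_matrix t s y k =
     foldl (\<lambda>H i. bfgs_update (s i) (y i) H)
       (((s (k - 1) \<bullet> y (k - 1)) / (y (k - 1) \<bullet> y (k - 1))) *\<^sub>R mat 1)
       [k - t..<k]"

definition cos_angle :: "real^'n \<Rightarrow> real^'n \<Rightarrow> real" where
  "cos_angle u v = (u \<bullet> v) / (norm u * norm v)"

definition sym_pos_def_mat :: "real^'n^'n \<Rightarrow> bool" where
  "sym_pos_def_mat A \<longleftrightarrow> transpose A = A \<and> (\<forall>v. v \<noteq> 0 \<longrightarrow> v \<bullet> (A *v v) > 0)"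

end

theory Submission
  imports Defs
begin

lemma outer_mulv: "outer u v *v w = (v \<bullet> w) *\<^sub>R u"
  by (simp add: outer_def matrix_vector_mult_def vec_eq_iff inner_vec_def sum_distrib_left
      mult.commute mult.left_commute)

lemma trace_outer: "trace (outer u v) = u \<bullet> v"
  by (simp add: trace_def outer_def inner_vec_def)

lemma trace_scaleR: "trace (c *\<^sub>R (A::real^'n^'n)) = c * trace A"
  by (simp add: trace_def sum_distrib_left)

lemma bfgs_mulv:
  "bfgs_update s y H *v v =
     (let \<rho> = 1 / (y \<bullet> s); w = H *v (v - (\<rho> * (s \<bullet> v)) *\<^sub>R y)
      in w - (\<rho> * (y \<bullet> w)) *\<^sub>R s + (\<rho> * (s \<bullet> v)) *\<^sub>R s)"
  unfolding bfgs_update_def Let_def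
  by (simp add: matrix_vector_mult_add_rdistrib matrix_vector_mult_diff_rdistrib
      matrix_vector_mul_assoc[symmetric] outer_mulv scaleR_matrix_vector_assoc[symmetric]
      matrix_vector_mult_diff_distrib matrix_vector_mult_scaleR algebra_simps)

abbreviation e :: "'n::finite \<Rightarrow> real^'n" where "e i \<equiv> (mat 1 :: real^'n^'n) $ i"

lemma det_base: "det (\<chi> i. if i = k then v else e i) = (v::real^'n) $ k"
proof -
  have r: "\<And>i. row i (mat 1 :: real^'n^'n) = e i" by (simp add: row_def vec_eq_iff)
  have "sum (\<lambda>i. v$i *s e i) UNIV = v"
    by (simp add: vec_eq_iff mat_def sum_component if_distrib cong: if_cong)
  then show ?thesis
    using cramer_lemma_transpose[of k v "mat 1 :: real^'n^'n"] by (simp only: r) simp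
qed

lemma det_claim2:
  assumes "finite S" "k \<notin> S"
  shows "det (\<chi> i. if i = k then v else if i \<in> S then e i + u$i *s v else e i) = (v::real^'n) $ k"
  using assms
proof (induction S rule: finite_induct)
  case empty
  have "(\<chi> i. if i = k then v else if i \<in> {} then e i + u$i *s v else e i) = (\<chi> i. if i = k then v else e i)"
    by (intro arg_cong[where f=vec_lambda] ext) simp
  then show ?case using det_base[of k v] by simp
next
  case (insert j S)
  define N where "N = (\<lambda>i. if i = k then v else if i \<in> S then e i + u$i *s v else e i)"
  have jk: "j \<noteq> k" using insert by auto
  have eq: "(\<chi> i. if i = k then v else if i \<in> insert j S then e i + u$i *s v else e i)
     = (\<chi> i. if i = j then e j + u$j *s v else N i)"
    using jk by (auto simp: vec_eq_iff N_def)
  have e1: "(\<chi> i. if i = j then e j else N i) = (\<chi> i. N i)"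
    using insert jk by (auto simp: vec_eq_iff N_def)
  have e2: "det (\<chi> i. if i = j then v else N i) = 0"
    by (rule det_identical_rows[OF jk]) (simp add: row_def N_def vec_eq_iff jk)
  show ?case
    unfolding eq det_row_add[of j "\<lambda>_. e j" "\<lambda>_. u$j *s v" N] det_row_mul[of j "u$j" "\<lambda>_. v" N]
    using e1 e2 insert by (simp add: N_def)
qed

lemma det_claim1:
  assumes "finite S"
  shows "det (\<chi> i. if i \<in> S then e i + u$i *s v else e i) = 1 + (\<Sum>i\<in>S. u$i * (v::real^'n)$i)"
  using assms
proof (induction S rule: finite_induct)
  case empty
  have "(\<chi> i. e i) = (mat 1 :: real^'n^'n)" by (simp add: vec_eq_iff)
  then show ?case by simp
next
  case (insert k S)
  define N where "N = (\<lambda>i. if i \<in> S then e i + u$i *s v else e i)"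
  have eq: "(\<chi> i. if i \<in> insert k S then e i + u$i *s v else e i)
     = (\<chi> i. if i = k then e k + u$k *s v else N i)"
    by (auto simp: vec_eq_iff N_def)
  have e1: "(\<chi> i. if i = k then e k else N i) = (\<chi> i. N i)"
    using insert by (auto simp: vec_eq_iff N_def)
  have e2: "(\<chi> i. if i = k then v else N i) = (\<chi> i. if i = k then v else if i \<in> S then e i + u$i *s v else e i)"
    by (simp add: N_def fun_eq_iff)
  show ?case
    unfolding eq det_row_add[of k "\<lambda>_. e k" "\<lambda>_. u$k *s v" N] det_row_mul[of k "u$k" "\<lambda>_. v" N]
    using e1 e2 insert det_claim2[OF insert(1,2), of v u] by (simp add: N_def)
qed

lemma det_rank1: "det (mat 1 + outer u v) = 1 + v \<bullet> (u::real^'n)"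
proof -
  have "mat 1 + outer u v = (\<chi> i. if i \<in> UNIV then e i + u$i *s v else e i)"
    by (simp add: vec_eq_iff outer_def)
  then show ?thesis using det_claim1[of UNIV u v]
    by (simp add: inner_vec_def mult.commute)
qed

lemma det_rank2:
  fixes u1 v1 u2 v2 :: "real^'n"
  assumes nz: "1 + v2 \<bullet> u2 \<noteq> 0"
  shows "det (mat 1 + outer u1 v1 + outer u2 v2) = (1 + v1 \<bullet> u1) * (1 + v2 \<bullet> u2) - (v1 \<bullet> u2) * (v2 \<bullet> u1)"
proof -
  define \<kappa> where "\<kappa> = (v2 \<bullet> u1) / (1 + v2 \<bullet> u2)"
  define w where "w = u1 - \<kappa> *\<^sub>R u2"
  have ww: "w + (v2 \<bullet> w) *\<^sub>R u2 = u1"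
  proof -
    have "v2 \<bullet> w = v2 \<bullet> u1 - \<kappa> * (v2 \<bullet> u2)" by (simp add: w_def inner_diff_right)
    then have "w + (v2 \<bullet> w) *\<^sub>R u2 = u1 + (v2 \<bullet> u1 - \<kappa> * (1 + v2 \<bullet> u2)) *\<^sub>R u2"
      by (simp add: w_def algebra_simps)
    also have "v2 \<bullet> u1 - \<kappa> * (1 + v2 \<bullet> u2) = 0" using nz by (simp add: \<kappa>_def)
    finally show ?thesis by simp
  qed
  have fac: "mat 1 + outer u1 v1 + outer u2 v2 = (mat 1 + outer u2 v2) ** (mat 1 + outer w v1)"
  proof (subst matrix_eq, intro allI)
    fix z :: "real^'n"
    have "((mat 1 + outer u2 v2) ** (mat 1 + outer w v1)) *v z
        = z + (v1 \<bullet> z) *\<^sub>R (w + (v2 \<bullet> w) *\<^sub>R u2) + (v2 \<bullet> z) *\<^sub>R u2"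
      by (simp add: matrix_vector_mul_assoc[symmetric] matrix_vector_mult_add_rdistrib outer_mulv
          inner_add_right algebra_simps)
    then show "(mat 1 + outer u1 v1 + outer u2 v2) *v z = ((mat 1 + outer u2 v2) ** (mat 1 + outer w v1)) *v z"
      by (simp add: ww matrix_vector_mult_add_rdistrib outer_mulv)
  qed
  have "det (mat 1 + outer u1 v1 + outer u2 v2) = (1 + v2 \<bullet> u2) * (1 + v1 \<bullet> w)"
    unfolding fac det_mul det_rank1 ..
  also have "\<dots> = (1 + v1 \<bullet> u1) * (1 + v2 \<bullet> u2) - (v1 \<bullet> u2) * (v2 \<bullet> u1)"
    using nz by (simp add: w_def \<kappa>_def inner_diff_right field_simps)
  finally show ?thesis .
qed

definition symm :: "real^'n^'n \<Rightarrow> bool" where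
  "symm A \<longleftrightarrow> (\<forall>u v. u \<bullet> (A *v v) = (A *v u) \<bullet> v)"

definition pd :: "real^'n^'n \<Rightarrow> bool" where
  "pd A \<longleftrightarrow> (\<forall>v. v \<noteq> 0 \<longrightarrow> 0 < v \<bullet> (A *v v))"

lemma spd_from_def: "sym_pos_def_mat A \<Longrightarrow> symm A \<and> pd A"
  unfolding sym_pos_def_mat_def symm_def pd_def
  by (metis dot_lmul_matrix transpose_matrix_vector)

lemma symmD: "symm A \<Longrightarrow> u \<bullet> (A *v v) = (A *v u) \<bullet> v"
  by (simp add: symm_def)

lemma pd_nonneg: "pd A \<Longrightarrow> 0 \<le> v \<bullet> (A *v v)"
  unfolding pd_def by (cases "v = 0") (auto simp: less_imp_le)

lemma pd_zero: "pd A \<Longrightarrow> v \<bullet> (A *v v) = 0 \<Longrightarrow> v = 0"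
  unfolding pd_def by (metis less_irrefl)

lemma inv_facts:
  fixes H B :: "real^'n^'n"
  assumes sH: "symm H" and pH: "pd H" and HB: "H ** B = mat 1"
  shows "B ** H = mat 1" "\<And>v. H *v (B *v v) = v" "\<And>v. B *v (H *v v) = v" "symm B" "pd B"
proof -
  show BH: "B ** H = mat 1" using HB matrix_left_right_inverse by blast
  show hb: "\<And>v. H *v (B *v v) = v" using HB by (simp add: matrix_vector_mul_assoc)
  show "\<And>v. B *v (H *v v) = v" using BH by (simp add: matrix_vector_mul_assoc)
  show "symm B" unfolding symm_def
  proof (intro allI)
    fix u v
    have "u \<bullet> (B *v v) = (H *v (B *v u)) \<bullet> (B *v v)" by (simp add: hb)
    also have "\<dots> = (B *v u) \<bullet> (H *v (B *v v))" using symmD[OF sH] by simp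
    also have "\<dots> = (B *v u) \<bullet> v" by (simp add: hb)
    finally show "u \<bullet> (B *v v) = (B *v u) \<bullet> v" .
  qed
  show "pd B" unfolding pd_def
  proof (intro allI impI)
    fix v :: "real^'n" assume v: "v \<noteq> 0"
    have "B *v v \<noteq> 0" using hb[of v] v by (metis matrix_vector_mult_0_right)
    then have "0 < (B *v v) \<bullet> (H *v (B *v v))" using pH by (simp add: pd_def)
    also have "\<dots> = v \<bullet> (B *v v)" by (simp add: hb inner_commute)
    finally show "0 < v \<bullet> (B *v v)" .
  qed
qed

lemma bfgs_quad:
  fixes H :: "real^'n^'n" and s y u v :: "real^'n"
  defines "\<rho> \<equiv> 1 / (y \<bullet> s)"
  shows "u \<bullet> (bfgs_update s y H *v v) =
    (u - (\<rho> * (s \<bullet> u)) *\<^sub>R y) \<bullet> (H *v (v - (\<rho> * (s \<bullet> v)) *\<^sub>R y)) + \<rho> * (s \<bullet> u) * (s \<bullet> v)"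
  unfolding bfgs_mulv Let_def \<rho>_def[symmetric]
  by (simp add: inner_diff_left inner_diff_right inner_add_right inner_commute algebra_simps)

lemma bfgs_step:
  fixes H B :: "real^'n^'n" and s y :: "real^'n"
  assumes sH: "symm H" and pH: "pd H" and HB: "H ** B = mat 1" and ys: "0 < y \<bullet> s" and s0: "s \<noteq> 0"
  defines "a \<equiv> s \<bullet> (B *v s)"
  defines "B' \<equiv> B - (1/a) *\<^sub>R outer (B *v s) (B *v s) + (1/(y \<bullet> s)) *\<^sub>R outer y y"
  shows "symm (bfgs_update s y H)" "pd (bfgs_update s y H)" "bfgs_update s y H ** B' = mat 1"
    "trace B' = trace B - (norm (B *v s))^2 / a + (norm y)^2/(y \<bullet> s)"
    "det B' = det B * ((y \<bullet> s) / a)" "0 < a"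
proof -
  note IF = inv_facts[OF sH pH HB]
  define \<rho> where "\<rho> = 1 / (y \<bullet> s)"
  have \<rho>pos: "\<rho> > 0" using ys by (simp add: \<rho>_def)
  have \<rho>ys: "\<rho> * (y \<bullet> s) = 1" "\<rho> * (s \<bullet> y) = 1" using ys by (simp_all add: \<rho>_def inner_commute)
  define V where "V = (\<lambda>v. v - (\<rho> * (s \<bullet> v)) *\<^sub>R y)"
  have Q: "\<And>u v. u \<bullet> (bfgs_update s y H *v v) = V u \<bullet> (H *v V v) + \<rho> * (s \<bullet> u) * (s \<bullet> v)"
    unfolding V_def \<rho>_def by (rule bfgs_quad)
  show "0 < a" unfolding a_def using IF(5) s0 by (simp add: pd_def)
  then have a0: "a \<noteq> 0" by simp
  show "symm (bfgs_update s y H)" unfolding symm_def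
  proof (intro allI)
    fix u v
    have "V u \<bullet> (H *v V v) = V v \<bullet> (H *v V u)"
      using symmD[OF sH, of "V u" "V v"] by (simp add: inner_commute)
    then show "u \<bullet> (bfgs_update s y H *v v) = (bfgs_update s y H *v u) \<bullet> v"
      using Q[of u v] Q[of v u] by (simp add: inner_commute)
  qed
  show "pd (bfgs_update s y H)" unfolding pd_def
  proof (intro allI impI)
    fix v :: "real^'n" assume v0: "v \<noteq> 0"
    show "0 < v \<bullet> (bfgs_update s y H *v v)"
    proof (rule ccontr)
      assume "\<not> ?thesis"
      then have le: "V v \<bullet> (H *v V v) + \<rho> * (s \<bullet> v) * (s \<bullet> v) \<le> 0" using Q[of v v] by simp
      have n1: "0 \<le> V v \<bullet> (H *v V v)" using pd_nonneg[OF pH] .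
      have n2: "0 \<le> \<rho> * ((s \<bullet> v) * (s \<bullet> v))" using \<rho>pos by simp
      have "\<rho> * ((s \<bullet> v) * (s \<bullet> v)) = 0" using le n1 n2 unfolding mult.assoc by linarith
      then have sv: "s \<bullet> v = 0" using \<rho>pos by simp
      then have "V v = v" by (simp add: V_def)
      then have "v \<bullet> (H *v v) = 0" using le n1 n2 sv by simp
      then show False using pd_zero[OF pH] v0 by blast
    qed
  qed
  show "bfgs_update s y H ** B' = mat 1"
  proof (subst matrix_eq, intro allI)
    fix v :: "real^'n"
    define z where "z = B' *v v"
    have z: "z = B *v v - ((1/a) * ((B *v s) \<bullet> v)) *\<^sub>R (B *v s) + (\<rho> * (y \<bullet> v)) *\<^sub>R y"
      by (simp add: z_def B'_def \<rho>_def matrix_vector_mult_add_rdistrib matrix_vector_mult_diff_rdistrib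
          scaleR_matrix_vector_assoc[symmetric] outer_mulv)
    have sBv: "s \<bullet> (B *v v) = (B *v s) \<bullet> v" using symmD[OF IF(4)] .
    have sz: "s \<bullet> z = y \<bullet> v"
    proof -
      have "s \<bullet> z = s \<bullet> (B *v v) - (1/a) * ((B *v s) \<bullet> v) * a + \<rho> * (y \<bullet> v) * (s \<bullet> y)"
        by (simp add: z inner_diff_right inner_add_right a_def)
      also have "\<dots> = y \<bullet> v" using a0 \<rho>ys sBv by simp
      finally show ?thesis .
    qed
    have Vz: "V z = B *v v - ((1/a) * ((B *v s) \<bullet> v)) *\<^sub>R (B *v s)"
      unfolding V_def sz by (simp add: z)
    have HVz: "H *v V z = v - ((1/a) * ((B *v s) \<bullet> v)) *\<^sub>R s"
      by (simp add: Vz matrix_vector_mult_diff_distrib matrix_vector_mult_scaleR IF(2))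
    have yHVz: "y \<bullet> (H *v V z) = y \<bullet> v - ((1/a) * ((B *v s) \<bullet> v)) * (y \<bullet> s)"
      by (simp add: HVz inner_diff_right)
    have "bfgs_update s y H *v z = H *v V z - (\<rho> * (y \<bullet> (H *v V z))) *\<^sub>R s + (\<rho> * (s \<bullet> z)) *\<^sub>R s"
      unfolding bfgs_mulv Let_def V_def \<rho>_def ..
    also have "\<dots> = v"
      unfolding HVz yHVz sz using \<rho>ys by (simp add: algebra_simps)
    finally show "(bfgs_update s y H ** B') *v v = mat 1 *v v"
      by (simp add: z_def matrix_vector_mul_assoc[symmetric])
  qed
  show "trace B' = trace B - (norm (B *v s))^2 / a + (norm y)^2/(y \<bullet> s)"
    by (simp add: B'_def trace_add trace_sub trace_scaleR trace_outer power2_norm_eq_inner)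
  define u1 where "u1 = (- 1/a) *\<^sub>R (B *v s)"
  define u2 where "u2 = \<rho> *\<^sub>R y"
  have fac: "B' = (mat 1 + outer u1 s + outer u2 (H *v y)) ** B"
  proof (subst matrix_eq, intro allI)
    fix v :: "real^'n"
    have "(H *v y) \<bullet> (B *v v) = y \<bullet> v" using symmD[OF sH, of y "B *v v"] IF(2) by simp
    moreover have "s \<bullet> (B *v v) = (B *v s) \<bullet> v" using symmD[OF IF(4)] .
    ultimately show "B' *v v = ((mat 1 + outer u1 s + outer u2 (H *v y)) ** B) *v v"
      by (simp add: B'_def u1_def u2_def \<rho>_def matrix_vector_mul_assoc[symmetric]
          matrix_vector_mult_add_rdistrib matrix_vector_mult_diff_rdistrib
          scaleR_matrix_vector_assoc[symmetric] outer_mulv algebra_simps)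
  qed
  have yHy: "0 \<le> y \<bullet> (H *v y)" using pd_nonneg[OF pH] .
  have nz: "1 + (H *v y) \<bullet> u2 \<noteq> 0"
  proof -
    have "(H *v y) \<bullet> u2 = \<rho> * (y \<bullet> (H *v y))" by (simp add: u2_def inner_commute)
    then show ?thesis using yHy \<rho>pos by (smt (verit) mult_nonneg_nonneg)
  qed
  have "det B' = det B * ((1 + s \<bullet> u1) * (1 + (H *v y) \<bullet> u2) - (s \<bullet> u2) * ((H *v y) \<bullet> u1))"
    unfolding fac det_mul det_rank2[OF nz] by simp
  also have "(1 + s \<bullet> u1) = 0" using a0 by (simp add: u1_def a_def)
  also have "(s \<bullet> u2) * ((H *v y) \<bullet> u1) = - ((y \<bullet> s) / a)"
  proof -
    have "(H *v y) \<bullet> (B *v s) = y \<bullet> s" using symmD[OF sH, of y "B *v s"] IF(2) by simp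
    then show ?thesis using \<rho>ys a0 by (simp add: u1_def u2_def inner_commute)
  qed
  finally show "det B' = det B * ((y \<bullet> s) / a)" by simp
qed

lemma e_inner: "e i \<bullet> (w::real^'n) = w $ i"
proof -
  have "(\<Sum>k\<in>UNIV. (mat 1::real^'n^'n) $ i $ k * w $ k) = (\<Sum>k\<in>UNIV. if i = k then w $ k else 0)"
    by (rule sum.cong) (auto simp: mat_def)
  then show ?thesis by (simp add: inner_vec_def)
qed

lemma mulv_e: "(A::real^'n^'n) *v e j = (\<chi> k. A $ k $ j)"
  by (simp add: vec_eq_iff matrix_vector_mult_def mat_def if_distrib cong: if_cong)

lemma entry_quad: "e i \<bullet> ((A::real^'n^'n) *v e j) = A $ i $ j"
  by (simp add: e_inner mulv_e)

lemma e_nz: "e i \<noteq> (0::real^'n)"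
  by (simp add: vec_eq_iff mat_def)

lemma pd_diag: "pd A \<Longrightarrow> 0 < (A::real^'n^'n) $ i $ i"
  using e_nz[of i] entry_quad[of i A i] unfolding pd_def by metis

lemma diag_le_trace: "pd A \<Longrightarrow> (A::real^'n^'n) $ i $ i \<le> trace A"
  unfolding trace_def
  by (rule member_le_sum) (auto intro: less_imp_le pd_diag)

lemma trace_pos: "pd A \<Longrightarrow> 0 < trace (A::real^'n^'n)"
  unfolding trace_def by (rule sum_pos) (auto intro: pd_diag)

lemma entry_le_trace:
  fixes A :: "real^'n^'n"
  assumes sA: "symm A" and pA: "pd A"
  shows "\<bar>A $ i $ j\<bar> \<le> trace A"
proof -
  have sym: "A $ j $ i = A $ i $ j"
    using symmD[OF sA, of "e j" "e i"] by (simp add: entry_quad inner_commute e_inner mulv_e)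
  have q: "(e i + c *\<^sub>R e j) \<bullet> (A *v (e i + c *\<^sub>R e j)) = A$i$i + c * A$i$j + c * A$j$i + c*c * A$j$j" for c
    by (simp add: matrix_vector_mult_add_rdistrib inner_add_left inner_add_right entry_quad
        matrix_vector_right_distrib matrix_vector_mult_scaleR algebra_simps)
  have "0 \<le> A$i$i + 2 * A$i$j + A$j$j" using pd_nonneg[OF pA, of "e i + 1 *\<^sub>R e j"] q[of 1] sym by simp
  moreover have "0 \<le> A$i$i - 2 * A$i$j + A$j$j" using pd_nonneg[OF pA, of "e i + (-1) *\<^sub>R e j"] q[of "-1"] sym by simp
  moreover have "A$i$i \<le> trace A" "A$j$j \<le> trace A" using diag_le_trace[OF pA] by auto
  ultimately show ?thesis by linarith
qed

lemma mulv_norm_bound: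
  fixes A :: "real^'n^'n"
  assumes T: "\<And>i j. \<bar>A $ i $ j\<bar> \<le> T"
  shows "norm (A *v v) \<le> (real CARD('n))\<^sup>2 * T * norm v"
proof -
  have "norm (A *v v) \<le> (\<Sum>i\<in>UNIV. \<bar>(A *v v) $ i\<bar>)" by (rule norm_le_l1_cart)
  also have "\<dots> \<le> (\<Sum>i\<in>(UNIV::'n set). \<Sum>j\<in>(UNIV::'n set). T * norm v)"
  proof (rule sum_mono)
    fix i
    have "\<bar>(A *v v) $ i\<bar> = \<bar>\<Sum>j\<in>UNIV. A$i$j * v$j\<bar>" by (simp add: matrix_vector_mult_def)
    also have "\<dots> \<le> (\<Sum>j\<in>UNIV. \<bar>A$i$j * v$j\<bar>)" by (rule sum_abs)
    also have "\<dots> \<le> (\<Sum>j\<in>(UNIV::'n set). T * norm v)"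
      by (rule sum_mono) (simp add: abs_mult mult_mono' T component_le_norm_cart)
    finally show "\<bar>(A *v v) $ i\<bar> \<le> (\<Sum>j\<in>(UNIV::'n set). T * norm v)" .
  qed
  also have "\<dots> = (real CARD('n))\<^sup>2 * T * norm v" by (simp add: power2_eq_square)
  finally show ?thesis .
qed

lemma det_bound:
  fixes A :: "real^'n^'n"
  assumes sA: "symm A" and pA: "pd A"
  shows "\<bar>det A\<bar> \<le> real (card {p. p permutes (UNIV::'n set)}) * trace A ^ CARD('n)"
proof -
  have "\<bar>det A\<bar> \<le> (\<Sum>p\<in>{p. p permutes (UNIV::'n set)}. \<bar>of_int (sign p) * (\<Prod>i\<in>UNIV. A$i$p i)\<bar>)"
    unfolding det_def by (rule sum_abs)
  also have "\<dots> \<le> (\<Sum>p\<in>{p. p permutes (UNIV::'n set)}. trace A ^ CARD('n))"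
  proof (rule sum_mono)
    fix p
    have "\<bar>of_int (sign p) * (\<Prod>i\<in>UNIV. A$i$p i)\<bar> = (\<Prod>i\<in>UNIV. \<bar>A$i$p i\<bar>)"
      using abs_sign[of p] by (simp add: abs_mult abs_prod flip: of_int_abs)
    also have "\<dots> \<le> (\<Prod>i\<in>(UNIV::'n set). trace A)"
      by (rule prod_mono) (simp add: entry_le_trace[OF sA pA])
    finally show "\<bar>of_int (sign p) * (\<Prod>i\<in>UNIV. A$i$p i)\<bar> \<le> trace A ^ CARD('n)" by simp
  qed
  also have "\<dots> = real (card {p. p permutes (UNIV::'n set)}) * trace A ^ CARD('n)" by simp
  finally show ?thesis .
qed

lemma psi_lower:
  fixes A :: "real^'n^'n"
  assumes sA: "symm A" and pA: "pd A" and d0: "det A \<noteq> 0"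
  shows "- (ln (real (card {p. p permutes (UNIV::'n set)})) + real CARD('n) * ln (real CARD('n)))
           \<le> trace A - ln \<bar>det A\<bar>"
proof -
  define N where "N = real (card {p. p permutes (UNIV::'n set)})"
  define n where "n = real CARD('n)"
  define t where "t = trace A"
  have t0: "0 < t" using trace_pos[OF pA] by (simp add: t_def)
  have n0: "0 < n" by (simp add: n_def)
  have N0: "0 < N" unfolding N_def using card_permutations[of "UNIV::'n set" "CARD('n)"]
    by simp
  have "ln \<bar>det A\<bar> \<le> ln (N * t ^ CARD('n))"
    using det_bound[OF sA pA] d0 by (simp add: N_def t_def)
  also have "\<dots> = ln N + n * ln t" using N0 t0 by (simp add: ln_mult ln_realpow n_def)
  also have "ln t = ln n + ln (t / n)" using t0 n0 by (simp add: ln_div)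
  also have "ln (t / n) \<le> t / n - 1" using t0 n0 by (intro ln_le_minus_one) simp
  then have "n * ln (t / n) \<le> t - n" using n0 by (simp add: field_simps)
  then have "ln N + n * (ln n + ln (t / n)) \<le> ln N + n * ln n + t - n" by (simp add: algebra_simps)
  finally show ?thesis using n0 by (simp add: N_def n_def t_def)
qed

lemma pd_cs:
  fixes H :: "real^'n^'n"
  assumes sH: "symm H" and pH: "pd H"
  shows "(u \<bullet> (H *v w))\<^sup>2 \<le> (u \<bullet> (H *v u)) * (w \<bullet> (H *v w))"
proof (cases "w = 0")
  case True then show ?thesis by simp
next
  case False
  define b where "b = w \<bullet> (H *v w)"
  have b0: "0 < b" using pH False by (simp add: pd_def b_def)
  define c where "c = u \<bullet> (H *v w)"
  have wu: "w \<bullet> (H *v u) = c" using symmD[OF sH, of w u] by (simp add: c_def inner_commute)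
  define t where "t = - c / b"
  have "0 \<le> (u + t *\<^sub>R w) \<bullet> (H *v (u + t *\<^sub>R w))" by (rule pd_nonneg[OF pH])
  also have "\<dots> = u \<bullet> (H *v u) + 2 * t * c + t * t * b"
    by (simp add: matrix_vector_right_distrib matrix_vector_mult_scaleR inner_add_left inner_add_right
        wu b_def c_def algebra_simps)
  also have "\<dots> = u \<bullet> (H *v u) - c\<^sup>2 / b"
    using b0 by (simp add: t_def power2_eq_square field_simps)
  finally have "c\<^sup>2 / b \<le> u \<bullet> (H *v u)" by simp
  then show ?thesis using b0 by (simp add: c_def b_def field_simps)
qed

lemma cos_bound:
  fixes H B :: "real^'n^'n" and g :: "real^'n"
  assumes sH: "symm H" and pH: "pd H" and HB: "H ** B = mat 1" and g0: "g \<noteq> 0"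
    and KH: "\<And>z. norm (H *v z) \<le> KH * norm z" and KB: "\<And>z. norm (B *v z) \<le> KB * norm z"
    and KH0: "0 < KH" and KB0: "0 < KB"
  shows "1 / (KH * KB) \<le> ((H *v g) \<bullet> g) / (norm (H *v g) * norm g)"
proof -
  note IF = inv_facts[OF sH pH HB]
  define h where "h = H *v g"
  have h0: "h \<noteq> 0" using IF(3)[of g] g0 by (auto simp: h_def)
  have hn: "0 < norm h" using h0 by simp
  have gn: "0 < norm g" using g0 by simp
  have G: "h \<bullet> g = g \<bullet> (H *v g)" by (simp add: h_def inner_commute)
  have cs: "(h \<bullet> (H *v g))\<^sup>2 \<le> (h \<bullet> (H *v h)) * (g \<bullet> (H *v g))" by (rule pd_cs[OF sH pH])
  have hh: "h \<bullet> (H *v g) = (norm h)\<^sup>2" by (simp add: h_def power2_norm_eq_inner)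
  have "(norm h)\<^sup>2 * (norm h)\<^sup>2 \<le> (h \<bullet> (H *v h)) * (h \<bullet> g)"
    using cs unfolding hh G[symmetric] by (simp add: power2_eq_square)
  also have "h \<bullet> (H *v h) \<le> norm h * (KH * norm h)"
    using norm_cauchy_schwarz[of h "H *v h"] KH[of h] hn
    by (meson mult_left_mono norm_ge_zero order_trans)
  then have "(h \<bullet> (H *v h)) * (h \<bullet> g) \<le> norm h * (KH * norm h) * (h \<bullet> g)"
    using pd_nonneg[OF pH, of g] G by (intro mult_right_mono) auto
  finally have "(norm h)\<^sup>2 * (norm h)\<^sup>2 \<le> (norm h)\<^sup>2 * (KH * (h \<bullet> g))"
    by (simp add: power2_eq_square algebra_simps)
  then have 1: "(norm h)\<^sup>2 \<le> KH * (h \<bullet> g)" using hn by (metis mult_le_cancel_left_pos zero_less_power)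
  have "norm g \<le> KB * norm h" using KB[of h] IF(3)[of g] by (simp add: h_def)
  then have 2: "norm h * norm g \<le> KB * (norm h)\<^sup>2" using hn by (simp add: power2_eq_square field_simps)
  have "norm h * norm g \<le> KB * (KH * (h \<bullet> g))" using 1 2 KB0
    by (meson mult_left_mono less_imp_le order_trans)
  then show ?thesis using hn gn KH0 KB0 by (simp add: h_def field_simps)
qed

lemma pair_bounds:
  fixes grad g :: "real^'n \<Rightarrow> real^'n" and x p :: "real^'n"
  assumes lip: "\<And>u v. norm (grad u - grad v) \<le> M * norm (u - v)"
    and lower: "\<And>u v. m * (norm (u - v))\<^sup>2 \<le> (grad u - grad v) \<bullet> (u - v)"
    and noise_g: "\<And>z. norm (grad z - g z) \<le> \<epsilon>g"
    and c3: "c3 > 0" and m: "m > 0" and b: "\<beta> > 0" and p0: "p \<noteq> 0"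
    and len: "(g (x + \<beta> *\<^sub>R p) - g x) \<bullet> p \<ge> 2 * (1 + c3) * \<epsilon>g * norm p"
  defines "s \<equiv> \<beta> *\<^sub>R p" and "y \<equiv> g (x + \<beta> *\<^sub>R p) - g x"
  shows "s \<noteq> 0" "0 < y \<bullet> s" "m * (1 + c3) / (2 + c3) * (norm s)\<^sup>2 \<le> y \<bullet> s"
    "norm y \<le> M * (1 + c3) / c3 * norm s"
proof -
  show s0: "s \<noteq> 0" using b p0 by (simp add: s_def)
  have ns: "0 < norm s" using s0 by simp
  define z where "z = x + s"
  define D where "D = grad z - grad x"
  define E where "E = y - D"
  have yDE: "y = D + E" by (simp add: E_def)
  have "E = (g z - grad z) - (g x - grad x)" by (simp add: E_def D_def y_def z_def s_def)
  then have "norm E \<le> norm (g z - grad z) + norm (g x - grad x)" by (metis norm_triangle_ineq4)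
  also have "\<dots> \<le> 2 * \<epsilon>g" using noise_g[of z] noise_g[of x] by (simp add: norm_minus_commute)
  finally have nE: "norm E \<le> 2 * \<epsilon>g" .
  define A where "A = y \<bullet> s"
  define w where "w = \<epsilon>g * norm s"
  have ysl: "2 * (1 + c3) * w \<le> A"
  proof -
    have "\<beta> * (2 * (1 + c3) * \<epsilon>g * norm p) \<le> \<beta> * (y \<bullet> p)" using len b by (simp add: y_def)
    then show ?thesis using b by (simp add: A_def w_def s_def algebra_simps)
  qed
  have Ds: "m * (norm s)\<^sup>2 \<le> D \<bullet> s" using lower[of z x] by (simp add: D_def z_def)
  have "\<bar>E \<bullet> s\<bar> \<le> norm E * norm s" by (rule Cauchy_Schwarz_ineq2)
  also have "\<dots> \<le> 2 * \<epsilon>g * norm s" using nE by (simp add: mult_right_mono)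
  finally have Es: "- (2 * w) \<le> E \<bullet> s" by (simp add: w_def)
  have A1: "m * (norm s)\<^sup>2 - 2 * w \<le> A" using Ds Es by (simp add: A_def yDE inner_add_left)
  have "(1 + c3) * (m * (norm s)\<^sup>2 - 2 * w) \<le> (1 + c3) * A" using A1 c3 by (simp add: mult_left_mono)
  then have "(1 + c3) * (m * (norm s)\<^sup>2) \<le> (2 + c3) * A" using ysl by (simp add: algebra_simps)
  then show lo: "m * (1 + c3) / (2 + c3) * (norm s)\<^sup>2 \<le> y \<bullet> s" using c3
    by (simp add: A_def field_simps)
  have "0 < m * (1 + c3) / (2 + c3) * (norm s)\<^sup>2" using m c3 ns by simp
  then show "0 < y \<bullet> s" using lo by linarith
  have nD: "norm D \<le> M * norm s" using lip[of z x] by (simp add: D_def z_def)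
  have ny: "norm y \<le> M * norm s + 2 * \<epsilon>g" using nD nE yDE norm_triangle_ineq[of D E] by simp
  have "A \<le> norm y * norm s" unfolding A_def by (rule norm_cauchy_schwarz)
  then have "2 * (1 + c3) * \<epsilon>g * norm s \<le> norm y * norm s" using ysl by (simp add: w_def algebra_simps)
  then have e2: "2 * (1 + c3) * \<epsilon>g \<le> norm y" using ns by (simp add: mult_le_cancel_right_pos)
  have "(1 + c3) * norm y \<le> (1 + c3) * (M * norm s + 2 * \<epsilon>g)" using ny c3 by (simp add: mult_left_mono)
  then have "c3 * norm y \<le> (1 + c3) * M * norm s" using e2 by (simp add: algebra_simps)
  then show "norm y \<le> M * (1 + c3) / c3 * norm s" using c3 by (simp add: field_simps)
qed

lemma pd_inv_exists:
  fixes H :: "real^'n^'n"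
  assumes pH: "pd H" shows "\<exists>B. H ** B = mat 1"
proof -
  have "inj ((*v) H)"
  proof (rule injI)
    fix v w :: "real^'n" assume "H *v v = H *v w"
    then have "H *v (v - w) = 0" by (simp add: matrix_vector_mult_diff_distrib)
    then have "(v - w) \<bullet> (H *v (v - w)) = 0" by simp
    then have "v - w = 0" using pd_zero[OF pH] by blast
    then show "v = w" by simp
  qed
  then obtain B where "B ** H = mat 1" using matrix_left_invertible_injective by blast
  then show ?thesis using matrix_left_right_inverse by blast
qed

lemma count_lemma:
  fixes d :: "nat \<Rightarrow> real"
  assumes d0: "\<And>j. 0 \<le> d j" and S: "\<And>k. (\<Sum>j<k. d j) \<le> A + C * real k"
    and A: "0 \<le> A" and C: "0 \<le> C" and q: "0 < q" "q < 1"
  shows "\<exists>L>0. \<forall>k. q * real k \<le> real (card {j. j < k \<and> d j \<le> L})"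
proof -
  define L where "L = (A + C + 1) / (1 - q)"
  have L0: "L > 0" using A C q by (simp add: L_def)
  have "q * real k \<le> real (card {j. j < k \<and> d j \<le> L})" for k
  proof (cases "k = 0")
    case True then show ?thesis by simp
  next
    case False
    define bad where "bad = {j. j < k \<and> \<not> d j \<le> L}"
    define good where "good = {j. j < k \<and> d j \<le> L}"
    have fin: "finite bad" "finite good" by (auto simp: bad_def good_def)
    have un: "good \<union> bad = {..<k}" "good \<inter> bad = {}" by (auto simp: bad_def good_def)
    have ck: "card good + card bad = k" using card_Un_disjoint[OF fin(2) fin(1) un(2)] un(1) by simp
    have "real (card bad) * L = (\<Sum>j\<in>bad. L)" by simp
    also have "\<dots> \<le> (\<Sum>j\<in>bad. d j)" by (rule sum_mono) (auto simp: bad_def)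
    also have "\<dots> \<le> (\<Sum>j<k. d j)" by (rule sum_mono2) (auto simp: bad_def d0)
    also have "\<dots> \<le> A + C * real k" by (rule S)
    also have "\<dots> \<le> (A + C) * real k"
    proof -
      have "A * 1 \<le> A * real k" using False A by (intro mult_left_mono) auto
      then show ?thesis by (simp add: algebra_simps)
    qed
    also have "\<dots> \<le> (A + C + 1) * real k" by (intro mult_right_mono) auto
    also have "\<dots> = L * (1 - q) * real k" using q by (simp add: L_def)
    finally have "L * real (card bad) \<le> L * ((1 - q) * real k)" by (simp add: algebra_simps)
    then have "real (card bad) \<le> (1 - q) * real k" using L0 by (simp add: mult_le_cancel_left_pos)
    then have "q * real k \<le> real (card good)" using ck by (simp add: algebra_simps flip: of_nat_add)
    then show ?thesis by (simp add: good_def)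
  qed
  then show ?thesis using L0 by blast
qed

lemma funpow_nonneg:
  fixes F :: "real \<Rightarrow> real"
  assumes "\<And>a. 0 \<le> a \<Longrightarrow> 0 \<le> F a" "0 \<le> a" shows "0 \<le> (F ^^ j) a"
  using assms by (induction j) auto

lemma funpow_le_more:
  fixes F :: "real \<Rightarrow> real"
  assumes nn: "\<And>a. 0 \<le> a \<Longrightarrow> 0 \<le> F a" and inc: "\<And>a. 0 \<le> a \<Longrightarrow> a \<le> F a" and a: "0 \<le> a"
    and jt: "j \<le> t"
  shows "(F ^^ j) a \<le> (F ^^ t) a"
proof -
  have "\<And>n. (F ^^ n) a \<le> (F ^^ Suc n) a"
    using inc funpow_nonneg[OF nn a] by simp
  then show ?thesis using lift_Suc_mono_le[of "\<lambda>n. (F ^^ n) a"] jt by blast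
qed

definition pairok :: "real \<Rightarrow> real \<Rightarrow> real^'n \<Rightarrow> real^'n \<Rightarrow> bool" where
  "pairok mh Lh s y \<longleftrightarrow> s \<noteq> 0 \<and> 0 < y \<bullet> s \<and> mh * (norm s)\<^sup>2 \<le> y \<bullet> s \<and> norm y \<le> Lh * norm s"

lemma pairok_M:
  assumes "pairok mh Lh s y" "0 < mh"
  shows "(norm y)\<^sup>2 / (y \<bullet> s) \<le> Lh\<^sup>2 / mh" "norm s * norm y / (y \<bullet> s) \<le> Lh / mh"
    "(norm s)\<^sup>2 / (y \<bullet> s) \<le> 1 / mh" "0 \<le> Lh"
proof -
  have s0: "s \<noteq> 0" and ys: "0 < y \<bullet> s" and lo: "mh * (norm s)\<^sup>2 \<le> y \<bullet> s" and up: "norm y \<le> Lh * norm s"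
    using assms(1) by (auto simp: pairok_def)
  have ns: "0 < norm s" using s0 by simp
  show Lh: "0 \<le> Lh" using up ns by (metis norm_ge_zero order_trans zero_le_mult_iff not_less less_imp_le)
  have "(norm y)\<^sup>2 \<le> (Lh * norm s)\<^sup>2" using up by (intro power_mono) auto
  also have "\<dots> = Lh\<^sup>2 * (norm s)\<^sup>2" by (simp add: power_mult_distrib)
  finally have a: "(norm y)\<^sup>2 * mh \<le> Lh\<^sup>2 * (mh * (norm s)\<^sup>2)" using assms(2)
    by (simp add: mult_right_mono algebra_simps)
  also have "\<dots> \<le> Lh\<^sup>2 * (y \<bullet> s)" using lo by (intro mult_left_mono) auto
  finally show "(norm y)\<^sup>2 / (y \<bullet> s) \<le> Lh\<^sup>2 / mh" using ys assms(2) by (simp add: divide_simps)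
  have "norm s * norm y * mh \<le> norm s * (Lh * norm s) * mh" using up ns assms(2)
    by (intro mult_right_mono mult_left_mono) auto
  also have "\<dots> = Lh * (mh * (norm s)\<^sup>2)" by (simp add: power2_eq_square algebra_simps)
  also have "\<dots> \<le> Lh * (y \<bullet> s)" using lo Lh by (intro mult_left_mono) auto
  finally show "norm s * norm y / (y \<bullet> s) \<le> Lh / mh" using ys assms(2) by (simp add: divide_simps)
  show "(norm s)\<^sup>2 / (y \<bullet> s) \<le> 1 / mh" using lo ys assms(2) by (simp add: divide_simps mult.commute)
qed

lemma norm_e: "norm (e i :: real^'n) = 1"
proof -
  have "e i \<bullet> (e i :: real^'n) = 1" by (simp only: e_inner) (simp add: mat_def)
  then show ?thesis by (simp add: norm_eq_sqrt_inner)
qed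

lemma trace_quad: "trace (A::real^'n^'n) = (\<Sum>i\<in>UNIV. e i \<bullet> (A *v e i))"
  by (simp add: trace_def entry_quad)

lemma KH_bound:
  fixes H :: "real^'n^'n"
  assumes "symm H" "pd H"
  shows "norm (H *v z) \<le> ((real CARD('n))\<^sup>2 * trace H) * norm z"
  using mulv_norm_bound[of H "trace H" z] entry_le_trace[OF assms] by (simp add: mult.assoc)

lemma trace_bfgs_bound:
  fixes H :: "real^'n^'n"
  assumes sH: "symm H" and pH: "pd H" and ok: "pairok mh Lh s y" and mh: "0 < mh"
  shows "trace (bfgs_update s y H) \<le>
     real CARD('n) * ((real CARD('n))\<^sup>2 * trace H * (1 + Lh / mh)\<^sup>2 + 1 / mh)"
proof -
  define KH where "KH = (real CARD('n))\<^sup>2 * trace H"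
  have KH0: "0 \<le> KH" using trace_pos[OF pH] by (simp add: KH_def)
  have KHb: "\<And>z. norm (H *v z) \<le> KH * norm z" using KH_bound[OF sH pH] by (simp add: KH_def)
  define \<rho> where "\<rho> = 1 / (y \<bullet> s)"
  have ys: "0 < y \<bullet> s" using ok by (simp add: pairok_def)
  have \<rho>0: "0 < \<rho>" using ys by (simp add: \<rho>_def)
  note PM = pairok_M[OF ok mh]
  have each: "e i \<bullet> (bfgs_update s y H *v e i) \<le> KH * (1 + Lh / mh)\<^sup>2 + 1 / mh" for i
  proof -
    define v where "v = e i - (\<rho> * (s \<bullet> e i)) *\<^sub>R y"
    have Q: "e i \<bullet> (bfgs_update s y H *v e i) = v \<bullet> (H *v v) + \<rho> * (s \<bullet> e i) * (s \<bullet> e i)"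
      unfolding v_def \<rho>_def by (rule bfgs_quad)
    have se: "\<bar>s \<bullet> e i\<bar> \<le> norm s" using norm_cauchy_schwarz[of s "e i"] Cauchy_Schwarz_ineq2[of s "e i"]
      by (simp add: norm_e)
    have "norm v \<le> norm (e i) + norm ((\<rho> * (s \<bullet> e i)) *\<^sub>R y)" unfolding v_def by (rule norm_triangle_ineq4)
    also have "\<dots> = 1 + \<rho> * \<bar>s \<bullet> e i\<bar> * norm y" using \<rho>0 by (simp add: norm_e abs_mult)
    also have "\<dots> \<le> 1 + \<rho> * norm s * norm y" using se \<rho>0 by (simp add: mult_right_mono)
    also have "\<rho> * norm s * norm y \<le> Lh / mh" using PM(2) by (simp add: \<rho>_def)
    finally have nv: "norm v \<le> 1 + Lh / mh" by simp
    have "v \<bullet> (H *v v) \<le> norm v * norm (H *v v)" by (rule norm_cauchy_schwarz)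
    also have "\<dots> \<le> norm v * (KH * norm v)" by (intro mult_left_mono KHb) auto
    also have "\<dots> = KH * (norm v)\<^sup>2" by (simp add: power2_eq_square)
    also have "\<dots> \<le> KH * (1 + Lh / mh)\<^sup>2" using nv KH0 by (intro mult_left_mono power_mono) auto
    finally have 1: "v \<bullet> (H *v v) \<le> KH * (1 + Lh / mh)\<^sup>2" .
    have "\<rho> * (s \<bullet> e i) * (s \<bullet> e i) = \<rho> * \<bar>s \<bullet> e i\<bar>\<^sup>2" by (simp add: power2_eq_square)
    also have "\<dots> \<le> \<rho> * (norm s)\<^sup>2" using se \<rho>0 by (intro mult_left_mono power_mono) auto
    also have "\<dots> \<le> 1 / mh" using PM(3) by (simp add: \<rho>_def)
    finally show ?thesis using Q 1 by linarith
  qed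
  have "trace (bfgs_update s y H) \<le> (\<Sum>i\<in>(UNIV::'n set). KH * (1 + Lh / mh)\<^sup>2 + 1 / mh)"
    unfolding trace_quad by (rule sum_mono) (rule each)
  then show ?thesis by (simp add: KH_def)
qed

definition PhiT :: "real \<Rightarrow> real \<Rightarrow> real \<Rightarrow> real \<Rightarrow> real" where
  "PhiT c mh Lh x = c * (c\<^sup>2 * x * (1 + Lh / mh)\<^sup>2 + 1 / mh)"

lemma fold_bound:
  fixes H0 B0 :: "real^'n^'n" and s y :: "nat \<Rightarrow> real^'n"
  assumes "symm H0" "pd H0" "H0 ** B0 = mat 1" "\<forall>i\<in>set L. pairok mh Lh (s i) (y i)" "0 < mh"
    "trace B0 \<le> TB" "trace H0 \<le> TH"
  shows "\<exists>B. symm (foldl (\<lambda>H i. bfgs_update (s i) (y i) H) H0 L)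
            \<and> pd (foldl (\<lambda>H i. bfgs_update (s i) (y i) H) H0 L)
            \<and> foldl (\<lambda>H i. bfgs_update (s i) (y i) H) H0 L ** B = mat 1
            \<and> trace B \<le> TB + real (length L) * (Lh\<^sup>2 / mh)
            \<and> trace (foldl (\<lambda>H i. bfgs_update (s i) (y i) H) H0 L)
                \<le> (PhiT (real CARD('n)) mh Lh ^^ length L) TH"
  using assms
proof (induction L arbitrary: H0 B0 TB TH)
  case Nil then show ?case by auto
next
  case (Cons i L)
  have ok: "pairok mh Lh (s i) (y i)" using Cons.prems(4) by simp
  have s0: "s i \<noteq> 0" and ys: "0 < y i \<bullet> s i" using ok by (auto simp: pairok_def)
  define a where "a = s i \<bullet> (B0 *v s i)"
  define B1 where "B1 = B0 - (1/a) *\<^sub>R outer (B0 *v s i) (B0 *v s i) + (1/(y i \<bullet> s i)) *\<^sub>R outer (y i) (y i)"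
  define H1 where "H1 = bfgs_update (s i) (y i) H0"
  note ST = bfgs_step[OF Cons.prems(1,2,3) ys s0, folded a_def B1_def H1_def]
  define \<Phi> where "\<Phi> = PhiT (real CARD('n)) mh Lh"
  have ST3: "H1 ** B1 = mat 1" using ST(3) unfolding B1_def .
  have tB1: "trace B1 \<le> TB + Lh\<^sup>2 / mh"
  proof -
    have "0 \<le> (norm (B0 *v s i))\<^sup>2 / a" using ST(6) by simp
    then show ?thesis using ST(4) pairok_M(1)[OF ok Cons.prems(5)] Cons.prems(6) unfolding B1_def by linarith
  qed
  have tH1: "trace H1 \<le> \<Phi> TH"
  proof -
    have "trace H1 \<le> \<Phi> (trace H0)" unfolding H1_def \<Phi>_def PhiT_def
      by (rule trace_bfgs_bound[OF Cons.prems(1,2) ok Cons.prems(5)])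
    also have "\<dots> \<le> \<Phi> TH" unfolding \<Phi>_def PhiT_def using Cons.prems(7)
      by (intro mult_left_mono add_right_mono mult_right_mono) auto
    finally show ?thesis .
  qed
  obtain B where B: "symm (foldl (\<lambda>H i. bfgs_update (s i) (y i) H) H1 L)"
            "pd (foldl (\<lambda>H i. bfgs_update (s i) (y i) H) H1 L)"
            "foldl (\<lambda>H i. bfgs_update (s i) (y i) H) H1 L ** B = mat 1"
            "trace B \<le> (TB + Lh\<^sup>2 / mh) + real (length L) * (Lh\<^sup>2 / mh)"
            "trace (foldl (\<lambda>H i. bfgs_update (s i) (y i) H) H1 L) \<le> (\<Phi> ^^ length L) (\<Phi> TH)"
    using Cons.IH[OF ST(1,2) ST3, of "TB + Lh\<^sup>2 / mh" "\<Phi> TH"] Cons.prems tB1 tH1 unfolding \<Phi>_def by auto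
  have eqf: "foldl (\<lambda>H i. bfgs_update (s i) (y i) H) H0 (i # L) = foldl (\<lambda>H i. bfgs_update (s i) (y i) H) H1 L"
    by (simp add: H1_def)
  have tb: "TB + Lh\<^sup>2 / mh + real (length L) * (Lh\<^sup>2 / mh) = TB + real (length (i # L)) * (Lh\<^sup>2 / mh)"
    by (simp add: add_divide_distrib algebra_simps)
  have fp: "(\<Phi> ^^ length L) (\<Phi> TH) = (\<Phi> ^^ length (i # L)) TH"
    by (simp add: funpow_swap1)
  show ?case unfolding eqf \<Phi>_def[symmetric] using B tb fp by auto
qed

lemma line_deriv:
  fixes \<phi> :: "'a::real_inner \<Rightarrow> real"
  assumes deriv: "\<And>z. (\<phi> has_derivative (\<lambda>h. G z \<bullet> h)) (at z)"
  shows "((\<lambda>t. \<phi> (x + t *\<^sub>R d)) has_real_derivative (G (x + t *\<^sub>R d) \<bullet> d)) (at t)"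
proof -
  have d1: "((\<lambda>t. x + t *\<^sub>R d) has_derivative (\<lambda>h. h *\<^sub>R d)) (at t)"
    by (auto intro!: derivative_eq_intros)
  have "((\<phi> \<circ> (\<lambda>t. x + t *\<^sub>R d)) has_derivative ((\<lambda>h. G (x + t *\<^sub>R d) \<bullet> h) \<circ> (\<lambda>h. h *\<^sub>R d))) (at t)"
    by (rule diff_chain_at[OF d1 deriv])
  moreover have "((\<lambda>h. G (x + t *\<^sub>R d) \<bullet> h) \<circ> (\<lambda>h. h *\<^sub>R d)) = (*) (G (x + t *\<^sub>R d) \<bullet> d)"
    by (auto simp: fun_eq_iff mult.commute)
  ultimately show ?thesis by (simp add: has_field_derivative_def o_def)
qed

lemma upper_quad:
  fixes \<phi> :: "'a::real_inner \<Rightarrow> real"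
  assumes deriv: "\<And>z. (\<phi> has_derivative (\<lambda>h. G z \<bullet> h)) (at z)"
    and upper: "\<And>u v. (G u - G v) \<bullet> (u - v) \<le> M * (norm (u - v))\<^sup>2"
  shows "\<phi> y \<le> \<phi> x + G x \<bullet> (y - x) + M / 2 * (norm (y - x))\<^sup>2"
proof -
  define d where "d = y - x"
  define c where "c = G x \<bullet> d"
  define n2 where "n2 = (norm d)\<^sup>2"
  define h where "h = (\<lambda>t. \<phi> (x + t *\<^sub>R d) - t * c - M / 2 * t\<^sup>2 * n2)"
  have hd: "\<And>t. (h has_real_derivative (G (x + t *\<^sub>R d) \<bullet> d - c - M * t * n2)) (at t)"
  proof -
    fix t
    have B: "((\<lambda>t. t * c) has_real_derivative c) (at t)" by (auto intro!: derivative_eq_intros)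
    have C: "((\<lambda>t. M / 2 * t\<^sup>2 * n2) has_real_derivative M * t * n2) (at t)"
      by (auto intro!: derivative_eq_intros simp: algebra_simps)
    show "(h has_real_derivative (G (x + t *\<^sub>R d) \<bullet> d - c - M * t * n2)) (at t)"
      unfolding h_def by (intro DERIV_diff line_deriv[OF deriv] B C)
  qed
  obtain z where z: "0 < z" "z < 1" "h 1 - h 0 = (1 - 0) * (G (x + z *\<^sub>R d) \<bullet> d - c - M * z * n2)"
    using MVT2[of 0 1 h "\<lambda>t. G (x + t *\<^sub>R d) \<bullet> d - c - M * t * n2"] hd by auto
  have "(G (x + z *\<^sub>R d) - G x) \<bullet> ((x + z *\<^sub>R d) - x) \<le> M * (norm ((x + z *\<^sub>R d) - x))\<^sup>2"
    by (rule upper)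
  then have "z * ((G (x + z *\<^sub>R d) - G x) \<bullet> d) \<le> z * (M * z * n2)"
    by (simp add: n2_def power2_eq_square algebra_simps)
  then have "(G (x + z *\<^sub>R d) - G x) \<bullet> d \<le> M * z * n2" using z by simp
  then have "h 1 - h 0 \<le> 0" using z(3) by (simp add: c_def inner_diff_left)
  then show ?thesis by (simp add: h_def d_def c_def n2_def)
qed

lemma lower_lin:
  fixes \<phi> :: "'a::real_inner \<Rightarrow> real"
  assumes deriv: "\<And>z. (\<phi> has_derivative (\<lambda>h. G z \<bullet> h)) (at z)"
    and mono: "\<And>u v. 0 \<le> (G u - G v) \<bullet> (u - v)"
  shows "\<phi> x + G x \<bullet> (y - x) \<le> \<phi> y"
proof -
  define d where "d = y - x"
  define c where "c = G x \<bullet> d"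
  define h where "h = (\<lambda>t. \<phi> (x + t *\<^sub>R d) - t * c)"
  have hd: "\<And>t. (h has_real_derivative (G (x + t *\<^sub>R d) \<bullet> d - c)) (at t)"
  proof -
    fix t
    have B: "((\<lambda>t. t * c) has_real_derivative c) (at t)" by (auto intro!: derivative_eq_intros)
    show "(h has_real_derivative (G (x + t *\<^sub>R d) \<bullet> d - c)) (at t)"
      unfolding h_def by (intro DERIV_diff line_deriv[OF deriv] B)
  qed
  obtain z where z: "0 < z" "z < 1" "h 1 - h 0 = (1 - 0) * (G (x + z *\<^sub>R d) \<bullet> d - c)"
    using MVT2[of 0 1 h "\<lambda>t. G (x + t *\<^sub>R d) \<bullet> d - c"] hd by auto
  have "0 \<le> (G (x + z *\<^sub>R d) - G x) \<bullet> ((x + z *\<^sub>R d) - x)"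
    by (rule mono)
  then have "0 \<le> z * ((G (x + z *\<^sub>R d) - G x) \<bullet> d)"
    by (simp add: algebra_simps)
  then have "0 \<le> (G (x + z *\<^sub>R d) - G x) \<bullet> d" using z by (simp add: zero_le_mult_iff)
  then have "0 \<le> h 1 - h 0" using z(3) by (simp add: c_def inner_diff_left)
  then show ?thesis by (simp add: h_def d_def c_def)
qed

lemma grad_lipschitz:
  fixes \<phi> :: "'a::real_inner \<Rightarrow> real"
  assumes deriv: "\<And>z. (\<phi> has_derivative (\<lambda>h. G z \<bullet> h)) (at z)"
    and mono: "\<And>u v. 0 \<le> (G u - G v) \<bullet> (u - v)"
    and upper: "\<And>u v. (G u - G v) \<bullet> (u - v) \<le> M * (norm (u - v))\<^sup>2"
    and M: "0 < M"
  shows "norm (G y - G x) \<le> M * norm (y - x)"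
proof -
  have half: "\<phi> a + G a \<bullet> (b - a) + (norm (G b - G a))\<^sup>2 / (2 * M) \<le> \<phi> b" for a b
  proof -
    define D where "D = G b - G a"
    define z where "z = b - (1 / M) *\<^sub>R D"
    have 1: "\<phi> z \<le> \<phi> b + G b \<bullet> (z - b) + M / 2 * (norm (z - b))\<^sup>2"
      by (rule upper_quad[OF deriv upper])
    have 2: "\<phi> a + G a \<bullet> (z - a) \<le> \<phi> z" by (rule lower_lin[OF deriv mono])
    have e1: "G b \<bullet> (z - b) = - (1/M) * (G b \<bullet> D)" by (simp add: z_def)
    have e2: "M / 2 * (norm (z - b))\<^sup>2 = (norm D)\<^sup>2 / (2 * M)"
      using M by (simp add: z_def power2_eq_square field_simps)
    have e3: "G a \<bullet> (z - a) = G a \<bullet> (b - a) - (1/M) * (G a \<bullet> D)"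
      by (simp add: z_def inner_diff_right algebra_simps)
    have e4: "(1/M) * (G b \<bullet> D) - (1/M) * (G a \<bullet> D) = (norm D)\<^sup>2 / M"
      by (simp add: D_def power2_norm_eq_inner inner_diff_left divide_simps)
    have "(norm D)\<^sup>2 / (2 * M) = (norm D)\<^sup>2 / M - (norm D)\<^sup>2 / (2 * M)" by (simp add: field_simps)
    then show ?thesis using 1 2 e1 e2 e3 e4 unfolding D_def by linarith
  qed
  define D where "D = G y - G x"
  have h1: "\<phi> x + G x \<bullet> (y - x) + (norm D)\<^sup>2 / (2 * M) \<le> \<phi> y" using half[of x y] by (simp add: D_def)
  have h2: "\<phi> y + G y \<bullet> (x - y) + (norm D)\<^sup>2 / (2 * M) \<le> \<phi> x"
    using half[of y x] by (simp add: D_def norm_minus_commute)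
  have e: "G x \<bullet> (y - x) + G y \<bullet> (x - y) = - (D \<bullet> (y - x))"
    by (simp add: D_def inner_diff_left inner_diff_right algebra_simps)
  have "(norm D)\<^sup>2 / M \<le> D \<bullet> (y - x)" using h1 h2 e by (simp add: field_simps)
  also have "\<dots> \<le> norm D * norm (y - x)" by (rule norm_cauchy_schwarz)
  finally have "(norm D)\<^sup>2 \<le> M * (norm D * norm (y - x))" using M by (simp add: field_simps)
  then have "norm D * norm D \<le> norm D * (M * norm (y - x))" by (simp add: power2_eq_square algebra_simps)
  then show ?thesis unfolding D_def[symmetric]
    using M by (cases "norm D = 0") (auto simp: mult_le_cancel_left)
qed

lemma scaleI_mulv: "((c::real) *\<^sub>R mat 1) *v (v::real^'n) = c *\<^sub>R v"
  by (simp add: scaleR_matrix_vector_assoc[symmetric])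

lemma lbfgs_case:
  fixes H :: "nat \<Rightarrow> real^'n^'n" and s y :: "nat \<Rightarrow> real^'n"
  assumes H0: "symm (H 0)" "pd (H 0)" and t: "\<forall>k\<ge>1. H k = lbfgs_matrix t s y k"
    and pairk: "\<And>k. pd (H k) \<Longrightarrow> pairok mh Lh (s k) (y k)" and mh: "0 < mh" and Lh: "0 \<le> Lh"
  shows "\<exists>TH TB. \<forall>k. symm (H k) \<and> pd (H k) \<and>
            (1 \<le> k \<longrightarrow> (\<exists>B. H k ** B = mat 1 \<and> trace B \<le> TB \<and> trace (H k) \<le> TH))"
proof -
  define n where "n = real CARD('n)"
  have n1: "1 \<le> n" by (simp add: n_def)
  define TB where "TB = n * (Lh\<^sup>2/mh) + real t * (Lh\<^sup>2/mh)"
  define TH where "TH = (PhiT n mh Lh ^^ t) (n / mh)"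
  have lb: "\<exists>B. symm (H k) \<and> pd (H k) \<and> H k ** B = mat 1 \<and> trace B \<le> TB \<and> trace (H k) \<le> TH"
    if k1: "1 \<le> k" and ok: "\<forall>i<k. pairok mh Lh (s i) (y i)" for k
  proof -
    define si where "si = s (k - 1)"
    define yi where "yi = y (k - 1)"
    have okk: "pairok mh Lh si yi" using ok k1 by (simp add: si_def yi_def)
    have ys: "0 < yi \<bullet> si" and s0: "si \<noteq> 0" using okk by (auto simp: pairok_def)
    have y0: "yi \<noteq> 0" using ys by auto
    have yy: "yi \<bullet> yi = (norm yi)\<^sup>2" by (simp add: power2_norm_eq_inner)
    have yyp: "0 < yi \<bullet> yi" using y0 by simp
    define \<gamma> where "\<gamma> = (si \<bullet> yi) / (yi \<bullet> yi)"
    have \<gamma>0: "0 < \<gamma>" using ys yyp by (simp add: \<gamma>_def inner_commute)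
    have Hk: "H k = foldl (\<lambda>H i. bfgs_update (s i) (y i) H) (\<gamma> *\<^sub>R mat 1) [k - t..<k]"
      using t k1 by (simp add: lbfgs_matrix_def \<gamma>_def si_def yi_def)
    have sI: "symm (\<gamma> *\<^sub>R mat 1 :: real^'n^'n)" by (simp add: symm_def scaleI_mulv)
    have pI: "pd (\<gamma> *\<^sub>R mat 1 :: real^'n^'n)" using \<gamma>0 by (simp add: pd_def scaleI_mulv)
    have inv: "(\<gamma> *\<^sub>R mat 1 :: real^'n^'n) ** ((1/\<gamma>) *\<^sub>R mat 1) = mat 1"
      using \<gamma>0 by (simp add: matrix_eq matrix_vector_mul_assoc[symmetric] scaleI_mulv)
    have tB0: "trace ((1/\<gamma>) *\<^sub>R mat 1 :: real^'n^'n) \<le> n * (Lh\<^sup>2/mh)"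
    proof -
      have "1/\<gamma> = (norm yi)\<^sup>2 / (yi \<bullet> si)" using yy by (simp add: \<gamma>_def inner_commute)
      also have "\<dots> \<le> Lh\<^sup>2/mh" by (rule pairok_M(1)[OF okk mh])
      finally have "1/\<gamma> \<le> Lh\<^sup>2/mh" .
      then have "n * (1/\<gamma>) \<le> n * (Lh\<^sup>2/mh)" using n1 by (intro mult_left_mono) auto
      then show ?thesis by (simp add: trace_scaleR trace_I n_def mult.commute)
    qed
    have tH0: "trace (\<gamma> *\<^sub>R mat 1 :: real^'n^'n) \<le> n / mh"
    proof -
      have lo: "mh * (norm si)\<^sup>2 \<le> yi \<bullet> si" using okk by (simp add: pairok_def)
      have cs: "yi \<bullet> si \<le> norm yi * norm si" by (rule norm_cauchy_schwarz)
      have ns: "0 < norm si" using s0 by simp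
      have "mh * norm si * norm si \<le> norm yi * norm si" using lo cs by (simp add: power2_eq_square mult.assoc)
      then have "mh * norm si \<le> norm yi" using ns by (simp add: mult_le_cancel_right_pos)
      then have "(yi \<bullet> si) * mh \<le> norm yi * (mh * norm si)" using cs mh
        by (metis mult.assoc mult.commute mult_right_mono less_imp_le)
      also have "\<dots> \<le> norm yi * norm yi" using \<open>mh * norm si \<le> norm yi\<close> by (simp add: mult_left_mono)
      finally have "\<gamma> \<le> 1 / mh" using yyp mh yy
        by (simp add: \<gamma>_def inner_commute divide_simps power2_eq_square mult.commute)
      then have "n * \<gamma> \<le> n * (1 / mh)" using n1 by (intro mult_left_mono) auto
      then show ?thesis by (simp add: trace_scaleR trace_I n_def mult.commute)
    qed
    have okL: "\<forall>i\<in>set [k - t..<k]. pairok mh Lh (s i) (y i)" using ok by auto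
    obtain B where B: "symm (H k)" "pd (H k)" "H k ** B = mat 1"
      "trace B \<le> n * (Lh\<^sup>2/mh) + real (length [k - t..<k]) * (Lh\<^sup>2 / mh)"
      "trace (H k) \<le> (PhiT n mh Lh ^^ length [k - t..<k]) (n / mh)"
      using fold_bound[OF sI pI inv okL mh tB0 tH0] unfolding Hk[symmetric] n_def by blast
    have len: "length [k - t..<k] \<le> t" by simp
    have "real (length [k - t..<k]) * (Lh\<^sup>2 / mh) \<le> real t * (Lh\<^sup>2 / mh)"
      using len mh by (intro mult_right_mono) auto
    then have tb: "trace B \<le> TB" using B(4) by (simp add: TB_def)
    have nn: "\<And>a. 0 \<le> a \<Longrightarrow> 0 \<le> PhiT n mh Lh a" using n1 mh by (simp add: PhiT_def)
    have inc: "\<And>a. 0 \<le> a \<Longrightarrow> a \<le> PhiT n mh Lh a"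
    proof -
      fix a :: real assume a: "0 \<le> a"
      have f1: "1 \<le> (1 + Lh / mh)\<^sup>2" using Lh mh by (simp add: one_le_power)
      have "1 \<le> n\<^sup>2" using n1 by (simp add: one_le_power)
      then have "1 * 1 \<le> n\<^sup>2 * (1 + Lh / mh)\<^sup>2" using f1 by (intro mult_mono) auto
      then have "1 * 1 \<le> n * (n\<^sup>2 * (1 + Lh / mh)\<^sup>2)" using n1 by (intro mult_mono) auto
      then have "1 \<le> n * (n\<^sup>2 * (1 + Lh / mh)\<^sup>2)" by simp
      then have "a * 1 \<le> a * (n * (n\<^sup>2 * (1 + Lh / mh)\<^sup>2))" using a by (intro mult_left_mono) auto
      moreover have "0 \<le> n * (1 / mh)" using n1 mh by simp
      ultimately show "a \<le> PhiT n mh Lh a" by (simp add: PhiT_def algebra_simps)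
    qed
    have "(PhiT n mh Lh ^^ length [k - t..<k]) (n / mh) \<le> TH"
      unfolding TH_def using n1 mh by (intro funpow_le_more[OF nn inc] len) auto
    then show ?thesis using B tb by auto
  qed
  have good: "symm (H k) \<and> pd (H k)" for k
  proof (induction k rule: less_induct)
    case (less k)
    show ?case
    proof (cases "k = 0")
      case True then show ?thesis using H0 by simp
    next
      case False
      have "\<forall>i<k. pairok mh Lh (s i) (y i)" using less pairk by blast
      then show ?thesis using lb[of k] False by auto
    qed
  qed
  have "\<forall>k. symm (H k) \<and> pd (H k) \<and>
            (1 \<le> k \<longrightarrow> (\<exists>B. H k ** B = mat 1 \<and> trace B \<le> TB \<and> trace (H k) \<le> TH))"
  proof (intro allI conjI impI)
    fix k :: nat
    show "symm (H k)" "pd (H k)" using good by auto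
    assume "1 \<le> k"
    moreover have "\<forall>i<k. pairok mh Lh (s i) (y i)" using good pairk by blast
    ultimately show "\<exists>B. H k ** B = mat 1 \<and> trace B \<le> TB \<and> trace (H k) \<le> TH" using lb by blast
  qed
  then show ?thesis by blast
qed

lemma full_case:
  fixes H :: "nat \<Rightarrow> real^'n^'n" and s y G :: "nat \<Rightarrow> real^'n" and \<beta> :: "nat \<Rightarrow> real"
  assumes H0: "symm (H 0)" "pd (H 0)"
    and upd: "\<forall>k. H (Suc k) = bfgs_update (s k) (y k) (H k)"
    and pairk: "\<And>k. pd (H k) \<Longrightarrow> pairok mh Lh (s k) (y k)"
    and sdef: "\<And>k. s k = \<beta> k *\<^sub>R (- (H k *v G k))" and b0: "\<And>k. 0 < \<beta> k"
    and G0: "\<And>k. G k \<noteq> 0" and mh: "0 < mh" and q: "0 < q" "q < 1"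
  shows "\<exists>\<gamma>>0. \<forall>k. q * real k \<le> real (card {j. j < k \<and>
            \<gamma> \<le> ((H j *v G j) \<bullet> G j) / (norm (H j *v G j) * norm (G j))})"
proof -
  define cv where "cv j = ((H j *v G j) \<bullet> G j) / (norm (H j *v G j) * norm (G j))" for j
  obtain B0 where B0: "H 0 ** B0 = mat 1" using pd_inv_exists[OF H0(2)] by blast
  define Bq where "Bq = rec_nat B0 (\<lambda>k Bk. Bk - (1/(s k \<bullet> (Bk *v s k))) *\<^sub>R outer (Bk *v s k) (Bk *v s k)
                          + (1/(y k \<bullet> s k)) *\<^sub>R outer (y k) (y k))"
  have Bq0: "Bq 0 = B0" by (simp add: Bq_def)
  have BqS: "Bq (Suc k) = Bq k - (1/(s k \<bullet> (Bq k *v s k))) *\<^sub>R outer (Bq k *v s k) (Bq k *v s k)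
                          + (1/(y k \<bullet> s k)) *\<^sub>R outer (y k) (y k)" for k
    by (simp add: Bq_def)
  have inv: "symm (H k) \<and> pd (H k) \<and> H k ** Bq k = mat 1" for k
  proof (induction k)
    case 0 then show ?case using H0 B0 Bq0 by simp
  next
    case (Suc k)
    have ok: "pairok mh Lh (s k) (y k)" using pairk Suc by blast
    have ys: "0 < y k \<bullet> s k" and s0: "s k \<noteq> 0" using ok by (auto simp: pairok_def)
    note ST = bfgs_step[of "H k" "Bq k" "y k" "s k"]
    show ?case using ST Suc ys s0 upd by (simp add: BqS)
  qed
  define \<psi> where "\<psi> k = trace (Bq k) - ln \<bar>det (Bq k)\<bar>" for k
  define d where "d j = - 2 * ln (cv j)" for j
  define C1 where "C1 = Lh\<^sup>2 / mh - ln mh"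
  have cvpos: "0 < cv k" "cv k \<le> 1" for k
  proof -
    have "0 < G k \<bullet> (H k *v G k)" using inv[of k] G0[of k] by (simp add: pd_def)
    then have Gp: "0 < (H k *v G k) \<bullet> G k" by (simp add: inner_commute)
    then have "H k *v G k \<noteq> 0" by auto
    then show "0 < cv k" using Gp G0[of k] by (simp add: cv_def)
    have "(H k *v G k) \<bullet> G k \<le> norm (H k *v G k) * norm (G k)" by (rule norm_cauchy_schwarz)
    then show "cv k \<le> 1" using \<open>H k *v G k \<noteq> 0\<close> G0[of k] by (simp add: cv_def pos_divide_le_eq)
  qed
  have d0: "0 \<le> d k" for k using cvpos[of k] by (simp add: d_def ln_le_zero_iff)
  have detnz: "det (Bq k) \<noteq> 0" for k
  proof -
    have "det (H k) * det (Bq k) = 1" using inv[of k] det_mul[of "H k" "Bq k"] by simp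
    then show ?thesis by auto
  qed
  have rec: "\<psi> (Suc k) \<le> \<psi> k + C1 - d k" for k
  proof -
    define B where "B = Bq k"
    define g where "g = G k"
    define h where "h = H k *v g"
    define b where "b = \<beta> k"
    have sH: "symm (H k)" and pH: "pd (H k)" and HB: "H k ** B = mat 1" using inv[of k] by (auto simp: B_def)
    note IF = inv_facts[OF sH pH HB]
    have ok: "pairok mh Lh (s k) (y k)" using pairk pH by blast
    have ys: "0 < y k \<bullet> s k" and s0: "s k \<noteq> 0" and lo: "mh * (norm (s k))\<^sup>2 \<le> y k \<bullet> s k"
      using ok by (auto simp: pairok_def)
    have bp: "0 < b" using b0 by (simp add: b_def)
    have g0: "g \<noteq> 0" using G0 by (simp add: g_def)
    have sk: "s k = - (b *\<^sub>R h)" using sdef[of k] by (simp add: b_def h_def g_def)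
    have Bs: "B *v s k = - (b *\<^sub>R g)"
      by (simp add: sk h_def matrix_vector_mult_scaleR vec.neg IF(3))
    define Gm where "Gm = h \<bullet> g"
    have Gp: "0 < Gm" using pH g0 by (simp add: pd_def Gm_def h_def inner_commute)
    have hn: "0 < norm h" using Gp by (auto simp: Gm_def)
    have gn: "0 < norm g" using g0 by simp
    define a where "a = s k \<bullet> (B *v s k)"
    have a_eq: "a = b * b * Gm" unfolding a_def Bs by (simp add: sk Gm_def)
    have ap: "0 < a" using a_eq bp Gp by simp
    note ST = bfgs_step[OF sH pH HB ys s0, folded a_def]
    have BqS': "Bq (Suc k) = B - (1/a) *\<^sub>R outer (B *v s k) (B *v s k) + (1/(y k \<bullet> s k)) *\<^sub>R outer (y k) (y k)"
      by (simp add: BqS B_def a_def)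
    have tr: "trace (Bq (Suc k)) = trace B - (norm (B *v s k))\<^sup>2 / a + (norm (y k))\<^sup>2 / (y k \<bullet> s k)"
      using ST(4) BqS' by simp
    have dt: "det (Bq (Suc k)) = det B * ((y k \<bullet> s k) / a)"
      using ST(5) BqS' by simp
    have dB: "det B \<noteq> 0" using detnz by (simp add: B_def)
    have ldet: "ln \<bar>det (Bq (Suc k))\<bar> = ln \<bar>det B\<bar> + ln (y k \<bullet> s k) - ln a"
      using dB ys ap by (simp add: dt abs_mult ln_mult ln_div)
    define T where "T = (norm g)\<^sup>2 / Gm"
    have Tp: "0 < T" using gn Gp by (simp add: T_def)
    have BsT: "(norm (B *v s k))\<^sup>2 / a = T"
      using bp Gp by (simp add: Bs a_eq T_def power2_eq_square)
    have ym: "(norm (y k))\<^sup>2 / (y k \<bullet> s k) \<le> Lh\<^sup>2 / mh" by (rule pairok_M(1)[OF ok mh])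
    have la: "ln a = 2 * ln b + ln Gm" using bp Gp by (simp add: a_eq ln_mult)
    have nsk: "norm (s k) = b * norm h" using bp by (simp add: sk)
    have "ln (mh * (b * b * (norm h * norm h))) \<le> ln (y k \<bullet> s k)"
      using lo mh bp hn ys by (subst ln_le_cancel_iff) (auto simp: nsk power2_eq_square algebra_simps)
    then have lys: "ln mh + 2 * ln b + 2 * ln (norm h) \<le> ln (y k \<bullet> s k)"
      using mh bp hn by (simp add: ln_mult)
    have dk: "d k = - 2 * (ln Gm - ln (norm h) - ln (norm g))"
      using Gp hn gn by (simp add: d_def cv_def Gm_def h_def g_def ln_div ln_mult)
    have lT: "2 * ln (norm g) - ln Gm \<le> T"
    proof -
      have "ln T \<le> T - 1" using Tp by (rule ln_le_minus_one)
      moreover have "ln T = 2 * ln (norm g) - ln Gm" using gn Gp by (simp add: T_def ln_div ln_realpow)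
      ultimately show ?thesis by linarith
    qed
    have "\<psi> (Suc k) = trace B - T + (norm (y k))\<^sup>2 / (y k \<bullet> s k) - (ln \<bar>det B\<bar> + ln (y k \<bullet> s k) - ln a)"
      by (simp add: \<psi>_def tr ldet BsT)
    also have "\<dots> \<le> \<psi> k + C1 - d k"
      using ym la lys dk lT by (simp add: \<psi>_def B_def C1_def)
    finally show ?thesis .
  qed
  have sumb: "\<psi> k + (\<Sum>j<k. d j) \<le> \<psi> 0 + C1 * real k" for k
  proof (induction k)
    case 0 then show ?case by simp
  next
    case (Suc k) then show ?case using rec[of k] by (simp add: algebra_simps)
  qed
  define C0 where "C0 = ln (real (card {p. p permutes (UNIV::'n set)})) + real CARD('n) * ln (real CARD('n))"
  have psil: "- C0 \<le> \<psi> k" for k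
  proof -
    note IF = inv_facts[of "H k" "Bq k"]
    have "symm (Bq k)" "pd (Bq k)" using IF inv[of k] by auto
    then show ?thesis using psi_lower[of "Bq k"] detnz[of k] by (simp add: \<psi>_def C0_def)
  qed
  define A where "A = max 0 (\<psi> 0 + C0)"
  define C where "C = max 0 C1"
  have S: "(\<Sum>j<k. d j) \<le> A + C * real k" for k
  proof -
    have "C1 * real k \<le> C * real k" by (intro mult_right_mono) (auto simp: C_def)
    then show ?thesis using sumb[of k] psil[of k] by (simp add: A_def)
  qed
  obtain L where L: "L > 0" "\<forall>k. q * real k \<le> real (card {j. j < k \<and> d j \<le> L})"
    using count_lemma[OF d0 S _ _ q] by (auto simp: A_def C_def)
  define \<gamma> where "\<gamma> = exp (- L / 2)"
  have sub: "{j. j < k \<and> d j \<le> L} \<subseteq> {j. j < k \<and> \<gamma> \<le> cv j}" for k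
  proof
    fix j assume "j \<in> {j. j < k \<and> d j \<le> L}"
    then have j: "j < k" "d j \<le> L" by auto
    then have "- L / 2 \<le> ln (cv j)" by (simp add: d_def)
    then have "exp (- L / 2) \<le> exp (ln (cv j))" by simp
    then show "j \<in> {j. j < k \<and> \<gamma> \<le> cv j}" using j cvpos[of j] by (simp add: \<gamma>_def)
  qed
  have "q * real k \<le> real (card {j. j < k \<and> \<gamma> \<le> cv j})" for k
  proof -
    have "card {j. j < k \<and> d j \<le> L} \<le> card {j. j < k \<and> \<gamma> \<le> cv j}"
      by (rule card_mono) (use sub in auto)
    then show ?thesis using L(2)[rule_format, of k] by linarith
  qed
  then show ?thesis unfolding cv_def by (intro exI[of _ \<gamma>]) (auto simp: \<gamma>_def)
qed

theorem lemma3p2: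
  fixes \<phi> f :: "real^'n \<Rightarrow> real"
    and grad_\<phi> g :: "real^'n \<Rightarrow> real^'n"
    and m M \<epsilon>f \<epsilon>g c1 c2 c3 :: real
    and x p s y :: "nat \<Rightarrow> real^'n"
    and \<alpha> \<beta> :: "nat \<Rightarrow> real"
    and H :: "nat \<Rightarrow> real^'n^'n"
  assumes deriv: "\<And>z. (\<phi> has_derivative (\<lambda>h. grad_\<phi> z \<bullet> h)) (at z)"
    and mM: "0 < m" "m \<le> M"
    and lower: "\<And>u v. m * (norm (u - v))\<^sup>2 \<le> (grad_\<phi> u - grad_\<phi> v) \<bullet> (u - v)"
    and upper: "\<And>u v. (grad_\<phi> u - grad_\<phi> v) \<bullet> (u - v) \<le> M * (norm (u - v))\<^sup>2"
    and noise_f: "\<And>z. \<bar>\<phi> z - f z\<bar> \<le> \<epsilon>f"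
    and noise_g: "\<And>z. norm (grad_\<phi> z - g z) \<le> \<epsilon>g"
    and eps: "\<epsilon>f \<ge> 0" "\<epsilon>g > 0"
    and cs: "0 < c1" "c1 < c2" "c2 < 1" "c3 > 0"
    and H0: "sym_pos_def_mat (H 0)"
    and nonstat: "\<And>k. g (x k) \<noteq> 0"
    and dir: "\<And>k. p k = - (H k *v g (x k))"
    and linesearch: "\<And>k. (\<alpha> k > 0
                 \<and> f (x k + \<alpha> k *\<^sub>R p k) \<le> f (x k) + c1 * \<alpha> k * (g (x k) \<bullet> p k)
                 \<and> g (x k + \<alpha> k *\<^sub>R p k) \<bullet> p k \<ge> c2 * (g (x k) \<bullet> p k))
              \<or> f (x k + \<alpha> k *\<^sub>R p k) \<le> f (x k)"
    and step: "\<And>k. x (Suc k) = x k + \<alpha> k *\<^sub>R p k"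
    and lengthening: "\<And>k. \<beta> k > 0 \<and>
        (g (x k + \<beta> k *\<^sub>R p k) - g (x k)) \<bullet> p k \<ge> 2 * (1 + c3) * \<epsilon>g * norm (p k)"
    and s_def: "\<And>k. s k = \<beta> k *\<^sub>R p k"
    and y_def: "\<And>k. y k = g (x k + \<beta> k *\<^sub>R p k) - g (x k)"
    and variant: "(\<forall>k. H (Suc k) = bfgs_update (s k) (y k) (H k))
               \<or> (\<exists>t::nat. t \<ge> 1 \<and> (\<forall>k\<ge>1. H k = lbfgs_matrix t s y k))"
  shows "\<forall>q::real. 0 < q \<and> q < 1 \<longrightarrow>
           (\<exists>\<gamma>>0. \<forall>k::nat.
              real (card {j. j < k \<and> cos_angle (p j) (- g (x j)) \<ge> \<gamma>}) \<ge> q * real k)"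
proof (intro allI impI)
  fix q :: real assume q: "0 < q \<and> q < 1"
  define n where "n = real CARD('n)"
  have n1: "1 \<le> n" by (simp add: n_def)
  define mh where "mh = m * (1 + c3) / (2 + c3)"
  define Lh where "Lh = M * (1 + c3) / c3"
  have mh0: "0 < mh" using mM cs by (simp add: mh_def)
  have Lh0: "0 \<le> Lh" using mM cs by (simp add: Lh_def)
  have mono: "\<And>u v. 0 \<le> (grad_\<phi> u - grad_\<phi> v) \<bullet> (u - v)"
    using lower mM(1) by (meson order_trans zero_le_mult_iff zero_le_power2 less_imp_le)
  have M0: "0 < M" using mM by simp
  have lip: "\<And>u v. norm (grad_\<phi> u - grad_\<phi> v) \<le> M * norm (u - v)"
    by (rule grad_lipschitz[OF deriv mono upper M0])
  have pairk: "pairok mh Lh (s k) (y k)" if pk: "p k \<noteq> 0" for k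
  proof -
    have b: "\<beta> k > 0" and len: "(g (x k + \<beta> k *\<^sub>R p k) - g (x k)) \<bullet> p k \<ge> 2 * (1 + c3) * \<epsilon>g * norm (p k)"
      using lengthening[of k] by auto
    note PB = pair_bounds[OF lip lower noise_g cs(4) mM(1) b pk len]
    show ?thesis unfolding pairok_def s_def y_def mh_def Lh_def using PB by auto
  qed
  have pnz: "p k \<noteq> 0" if "pd (H k)" for k
  proof
    assume "p k = 0"
    then have "H k *v g (x k) = 0" using dir[of k] by simp
    then have "g (x k) \<bullet> (H k *v g (x k)) = 0" by simp
    then show False using pd_zero[OF that] nonstat[of k] by blast
  qed
  have cos_eq: "cos_angle (p k) (- g (x k)) = ((H k *v g (x k)) \<bullet> g (x k)) / (norm (H k *v g (x k)) * norm (g (x k)))" for k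
    by (simp add: cos_angle_def dir)
  have cos_pos: "0 < cos_angle (p k) (- g (x k))" if "pd (H k)" for k
  proof -
    have "0 < g (x k) \<bullet> (H k *v g (x k))" using that nonstat[of k] by (simp add: pd_def)
    moreover have "H k *v g (x k) \<noteq> 0" using calculation by auto
    ultimately show ?thesis unfolding cos_eq using nonstat[of k] by (simp add: inner_commute)
  qed
  have cos_le1: "cos_angle (p k) (- g (x k)) \<le> 1" for k
  proof -
    have "(H k *v g (x k)) \<bullet> g (x k) \<le> norm (H k *v g (x k)) * norm (g (x k))" by (rule norm_cauchy_schwarz)
    moreover have "0 \<le> norm (H k *v g (x k)) * norm (g (x k))" by simp
    ultimately show ?thesis unfolding cos_eq
      by (cases "norm (H k *v g (x k)) * norm (g (x k)) = 0") (auto simp: pos_divide_le_eq)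
  qed
  show "\<exists>\<gamma>>0. \<forall>k::nat. real (card {j. j < k \<and> cos_angle (p j) (- g (x j)) \<ge> \<gamma>}) \<ge> q * real k"
  proof -
    have sH0: "symm (H 0)" "pd (H 0)" using spd_from_def[OF H0] by auto
    have pk': "\<And>k. pd (H k) \<Longrightarrow> pairok mh Lh (s k) (y k)" using pairk pnz by blast
    consider (full) "\<forall>k. H (Suc k) = bfgs_update (s k) (y k) (H k)"
      | (lb) t where "t \<ge> 1" "\<forall>k\<ge>1. H k = lbfgs_matrix t s y k" using variant by blast
    then show ?thesis
    proof cases
      case full
      have sdef': "\<And>k. s k = \<beta> k *\<^sub>R (- (H k *v g (x k)))" using s_def dir by simp
      have b0: "\<And>k. 0 < \<beta> k" using lengthening by blast
      obtain \<gamma> where "\<gamma> > 0" "\<forall>k. q * real k \<le> real (card {j. j < k \<and>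
            \<gamma> \<le> ((H j *v g (x j)) \<bullet> g (x j)) / (norm (H j *v g (x j)) * norm (g (x j)))})"
        using full_case[OF sH0 full pk' sdef' b0 nonstat mh0] q by blast
      then show ?thesis unfolding cos_eq[symmetric] by blast
    next
      case lb
      obtain TH TB where TT: "\<forall>k. symm (H k) \<and> pd (H k) \<and>
            (1 \<le> k \<longrightarrow> (\<exists>B. H k ** B = mat 1 \<and> trace B \<le> TB \<and> trace (H k) \<le> TH))"
        using lbfgs_case[OF sH0 lb(2) pk' mh0 Lh0] by blast
      define n2 where "n2 = (real CARD('n))\<^sup>2"
      have n2p: "0 < n2" by (simp add: n2_def)
      obtain B1 where B1: "H 1 ** B1 = mat 1" "trace B1 \<le> TB" "trace (H 1) \<le> TH" using TT by auto
      have THp: "0 < TH" using trace_pos[of "H 1"] TT B1 by (meson less_le_trans)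
      have TBp: "0 < TB" using trace_pos[of B1] inv_facts[of "H 1" B1] TT B1 by (meson less_le_trans)
      define \<gamma>L where "\<gamma>L = 1 / ((n2 * TH) * (n2 * TB))"
      have \<gamma>Lp: "0 < \<gamma>L" using n2p THp TBp by (simp add: \<gamma>L_def)
      have cosL: "\<gamma>L \<le> cos_angle (p k) (- g (x k))" if k1: "1 \<le> k" for k
      proof -
        obtain B where B: "H k ** B = mat 1" "trace B \<le> TB" "trace (H k) \<le> TH" using TT k1 by blast
        have sH: "symm (H k)" and pH: "pd (H k)" using TT by auto
        note IF = inv_facts[OF sH pH B(1)]
        have KH: "norm (H k *v z) \<le> (n2 * TH) * norm z" for z
        proof -
          have "norm (H k *v z) \<le> (n2 * trace (H k)) * norm z" using KH_bound[OF sH pH] by (simp add: n2_def)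
          also have "\<dots> \<le> (n2 * TH) * norm z" using B(3) n2p by (intro mult_right_mono) auto
          finally show ?thesis .
        qed
        have KB: "norm (B *v z) \<le> (n2 * TB) * norm z" for z
        proof -
          have "norm (B *v z) \<le> (n2 * trace B) * norm z" using KH_bound[OF IF(4,5)] by (simp add: n2_def)
          also have "\<dots> \<le> (n2 * TB) * norm z" using B(2) n2p by (intro mult_right_mono) auto
          finally show ?thesis .
        qed
        show ?thesis unfolding cos_eq \<gamma>L_def
          by (rule cos_bound[OF sH pH B(1) nonstat KH KB]) (use n2p THp TBp in auto)
      qed
      define \<gamma> where "\<gamma> = min \<gamma>L (cos_angle (p 0) (- g (x 0)))"
      have \<gamma>p: "0 < \<gamma>" using \<gamma>Lp cos_pos[of 0] TT by (simp add: \<gamma>_def)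
      have all: "\<gamma> \<le> cos_angle (p k) (- g (x k))" for k
        using cosL[of k] by (cases "k = 0") (auto simp: \<gamma>_def)
      have "{j. j < k \<and> cos_angle (p j) (- g (x j)) \<ge> \<gamma>} = {..<k}" for k using all by auto
      then have "\<forall>k. real (card {j. j < k \<and> cos_angle (p j) (- g (x j)) \<ge> \<gamma>}) \<ge> q * real k"
      proof (intro allI)
        fix k :: nat
        have "q * real k \<le> 1 * real k" using q by (intro mult_right_mono) auto
        then show "real (card {j. j < k \<and> cos_angle (p j) (- g (x j)) \<ge> \<gamma>}) \<ge> q * real k"
          using \<open>\<And>k. {j. j < k \<and> cos_angle (p j) (- g (x j)) \<ge> \<gamma>} = {..<k}\<close>[of k] by simp
      qed
      then show ?thesis using \<gamma>p by blast
    qed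
  qed
qed

end
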